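(* Let $X,Y$ be locally compact Hausdorff spaces, $p\colon X\to Y$ a continuous proper map, and $\mu_X$ a positive Radon measure on $X$. Let $A\subset C_0(Y)$ be a dense $\mathbb{C}$-subalgebra, and let $M\subset\mathcal{L}^1(X,\mu_X)$ be a $p^*A$-module under pointwise multiplication, stable under complex conjugation, such that for every $m\in M$ there exists $n\in M$ with $|m|\le n$. Then for every $m\in M$ and every $c\in C_0(Y)$, the function $(c\circ p)\,m$ lies in $\overline{M}^{\tau_M}$.
   Context: $p^*A=\{a\circ p: a\in A\}$. For a linear subspace $M\subset\mathcal{L}^1(X,\mu_X)$ stable under complex conjugation, $\overline{M}^{\tau_M}$ denotes the set of $h\in\mathcal{L}^1(X,\mu_X)$ such that for every $\epsilon>0$ there exist $m_1,m_2\in M$ with $|h-m_1|\le m_2$ pointwise and $\mu_X(m_2)<\epsilon$ (the closure of $M$ in the linear topology $\tau_M$ with neighborhoods of $0$ given by $\{h: \exists m\in M,\ |h|\le m,\ \mu_X(m)<\epsilon\}$). *)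

theory Defs
  imports "HOL-Analysis.Analysis"
begin

definition C0 :: "('y::topological_space \<Rightarrow> complex) set" where
  "C0 = {c. continuous_on UNIV c \<and>
            (\<forall>e>0. compact {y. cmod (c y) \<ge> e})}"

definition complex_subalgebra_C0 :: "('y::topological_space \<Rightarrow> complex) set \<Rightarrow> bool" where
  "complex_subalgebra_C0 A \<longleftrightarrow> A \<subseteq> C0 \<and> (\<lambda>_. 0) \<in> A \<and>
     (\<forall>a\<in>A. \<forall>b\<in>A. (\<lambda>y. a y + b y) \<in> A \<and> (\<lambda>y. a y * b y) \<in> A) \<and>
     (\<forall>a\<in>A. \<forall>z::complex. (\<lambda>y. z * a y) \<in> A)"

definition dense_in_C0 :: "('y::topological_space \<Rightarrow> complex) set \<Rightarrow> bool" where
  "dense_in_C0 A \<longleftrightarrow> (\<forall>c\<in>C0. \<forall>e>0. \<exists>a\<in>A. \<forall>y. cmod (c y - a y) \<le> e)"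

definition radon_measure :: "'x::topological_space measure \<Rightarrow> bool" where
  "radon_measure mu \<longleftrightarrow> sets mu = sets borel \<and>
     (\<forall>K. compact K \<longrightarrow> emeasure mu K < \<infinity>) \<and>
     (\<forall>B\<in>sets borel. emeasure mu B = (INF U\<in>{U. open U \<and> B \<subseteq> U}. emeasure mu U)) \<and>
     (\<forall>U. open U \<longrightarrow> emeasure mu U = (SUP K\<in>{K. compact K \<and> K \<subseteq> U}. emeasure mu K))"

definition cdom :: "('x \<Rightarrow> complex) \<Rightarrow> ('x \<Rightarrow> complex) \<Rightarrow> bool" where
  "cdom f g \<longleftrightarrow> (\<forall>x. g x \<in> \<real> \<and> cmod (f x) \<le> Re (g x))"

definition tau_closure :: "'x measure \<Rightarrow> ('x \<Rightarrow> complex) set \<Rightarrow> ('x \<Rightarrow> complex) set" where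
  "tau_closure mu M = {h. integrable mu h \<and>
     (\<forall>e>0. \<exists>m1\<in>M. \<exists>m2\<in>M. cdom (\<lambda>x. h x - m1 x) m2 \<and> Re (integral\<^sup>L mu m2) < e)}"

end

theory Submission
  imports Defs
begin

theorem mainTheorem7:
  fixes p :: "'x::t2_space \<Rightarrow> 'y::t2_space"
    and mu :: "'x measure"
    and A :: "('y \<Rightarrow> complex) set"
    and M :: "('x \<Rightarrow> complex) set"
  assumes "locally_compact_space (euclidean :: 'x topology)"
    and "locally_compact_space (euclidean :: 'y topology)"
    and "continuous_on UNIV p"
    and "proper_map euclidean euclidean p"
    and "radon_measure mu"
    and "complex_subalgebra_C0 A"
    and "dense_in_C0 A"
    and "M \<subseteq> {f. integrable mu f}"
    and "(\<lambda>_. 0) \<in> M"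
    and "\<And>f g. f \<in> M \<Longrightarrow> g \<in> M \<Longrightarrow> (\<lambda>x. f x + g x) \<in> M"
    and "\<And>f z. f \<in> M \<Longrightarrow> (\<lambda>x. z * f x) \<in> M"
    and "\<And>a f. a \<in> A \<Longrightarrow> f \<in> M \<Longrightarrow> (\<lambda>x. a (p x) * f x) \<in> M"
    and "\<And>f. f \<in> M \<Longrightarrow> (\<lambda>x. cnj (f x)) \<in> M"
    and "\<And>m. m \<in> M \<Longrightarrow> \<exists>n\<in>M. cdom m n"
  shows "\<forall>m\<in>M. \<forall>c\<in>C0. (\<lambda>x. c (p x) * m x) \<in> tau_closure mu M"
proof (intro ballI)
  fix m :: "'x \<Rightarrow> complex" and c :: "'y \<Rightarrow> complex"
  assume mM: "m \<in> M" and cC: "c \<in> C0"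
  have sets: "sets mu = sets borel" using assms(5) by (simp add: radon_measure_def)
  obtain n where nM: "n \<in> M" and mn: "cdom m n" using assms(14) mM by blast
  have nint: "integrable mu n" and mint: "integrable mu m" using assms(8) nM mM by auto
  have cp_cont: "continuous_on UNIV (\<lambda>x. c (p x))"
    using cC assms(3) unfolding C0_def
    by (auto intro: continuous_on_compose2[of UNIV c UNIV p])
  have cp_meas: "(\<lambda>x. c (p x)) \<in> borel_measurable mu"
    by (subst measurable_cong_sets[OF sets refl]) (rule borel_measurable_continuous_onI[OF cp_cont])
  have h_meas: "(\<lambda>x. c (p x) * m x) \<in> borel_measurable mu"
    using cp_meas borel_measurable_integrable[OF mint] by measurable
  define I where "I = \<bar>Re (integral\<^sup>L mu n)\<bar> + 1"
  have Ipos: "I > 0" unfolding I_def by simp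
  have key: "\<exists>m1\<in>M. \<exists>m2\<in>M. cdom (\<lambda>x. c (p x) * m x - m1 x) m2 \<and> Re (integral\<^sup>L mu m2) < e"
    if "e > 0" for e :: real
  proof -
    define d where "d = e / I"
    have dpos: "d > 0" using that Ipos by (simp add: d_def)
    obtain a where aA: "a \<in> A" and ca: "\<And>y. cmod (c y - a y) \<le> d"
      using assms(7) cC dpos unfolding dense_in_C0_def by blast
    let ?m1 = "\<lambda>x. a (p x) * m x"
    let ?m2 = "\<lambda>x. complex_of_real d * n x"
    have m1M: "?m1 \<in> M" using assms(12) aA mM by blast
    have m2M: "?m2 \<in> M" using assms(11) nM by blast
    have cd: "cdom (\<lambda>x. c (p x) * m x - ?m1 x) ?m2"
      unfolding cdom_def
    proof
      fix x
      have nr: "n x \<in> \<real>" and mle: "cmod (m x) \<le> Re (n x)" using mn by (auto simp: cdom_def)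
      have "cmod (c (p x) * m x - ?m1 x) = cmod (c (p x) - a (p x)) * cmod (m x)"
        by (simp add: norm_mult[symmetric] algebra_simps)
      also have "\<dots> \<le> d * Re (n x)"
        using ca[of "p x"] mle dpos by (intro mult_mono) auto
      finally show "?m2 x \<in> \<real> \<and> cmod (c (p x) * m x - ?m1 x) \<le> Re (?m2 x)"
        using nr by (auto simp: Reals_def simp flip: of_real_mult)
    qed
    have "integral\<^sup>L mu ?m2 = complex_of_real d * integral\<^sup>L mu n"
      by simp
    hence "Re (integral\<^sup>L mu ?m2) = d * Re (integral\<^sup>L mu n)" by simp
    also have "\<dots> \<le> d * \<bar>Re (integral\<^sup>L mu n)\<bar>" using dpos by (intro mult_left_mono) auto
    also have "\<dots> < d * I" using dpos unfolding I_def by simp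
    also have "\<dots> = e" using Ipos by (simp add: d_def)
    finally have lt: "Re (integral\<^sup>L mu ?m2) < e" .
    show ?thesis
    proof (rule bexI[where x="?m1"])
      show "\<exists>m2\<in>M. cdom (\<lambda>x. c (p x) * m x - ?m1 x) m2 \<and> Re (integral\<^sup>L mu m2) < e"
      proof (rule bexI[where x="?m2"])
        show "cdom (\<lambda>x. c (p x) * m x - ?m1 x) ?m2 \<and> Re (integral\<^sup>L mu ?m2) < e"
          using cd lt by (rule conjI)
      qed (rule m2M)
    qed (rule m1M)
  qed
  have hint: "integrable mu (\<lambda>x. c (p x) * m x)"
  proof -
    obtain m1 m2 where m1M: "m1 \<in> M" and m2M: "m2 \<in> M"
      and cd: "cdom (\<lambda>x. c (p x) * m x - m1 x) m2"
      using key[of 1] by auto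
    have i1: "integrable mu m1" and i2: "integrable mu m2" using assms(8) m1M m2M by auto
    have "integrable mu (\<lambda>x. cmod (m1 x) + cmod (m2 x))"
      using Bochner_Integration.integrable_add[OF integrable_norm[OF i1] integrable_norm[OF i2]] by simp
    moreover have "AE x in mu. norm (c (p x) * m x) \<le> norm (cmod (m1 x) + cmod (m2 x))"
    proof (rule AE_I2)
      fix x
      have "cmod (c (p x) * m x - m1 x) \<le> Re (m2 x)" using cd by (simp add: cdom_def)
      also have "\<dots> \<le> cmod (m2 x)" by (rule complex_Re_le_cmod)
      finally have "cmod (c (p x) * m x) \<le> cmod (m1 x) + cmod (m2 x)"
        using norm_triangle_ineq2[of "c (p x) * m x" "m1 x"] by linarith
      thus "norm (c (p x) * m x) \<le> norm (cmod (m1 x) + cmod (m2 x))" by simp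
    qed
    ultimately show ?thesis by (rule Bochner_Integration.integrable_bound[OF _ h_meas])
  qed
  show "(\<lambda>x. c (p x) * m x) \<in> tau_closure mu M"
    unfolding tau_closure_def using hint key by blast
qed

end
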